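(* For subdistributions $\mu,\nu$ over nondeterministic expressions, the following are equivalent: (a) $\mu\xRightarrow{\tau}\nu$; (b) there is $\rho$ with $\mu\xrightarrow{\tau}\rho$ (combined transition) and $\rho\Rightarrow\nu$; (c) there is a derivation $(\nu_i^{\to},\nu_i^{\times})_{i\in\mathbb N}$ with $\mu=\nu_0^{\to}+\nu_0^{\times}$, $\nu=\sum_{i\in\mathbb N}\nu_i^{\times}$ and $\nu_0^{\times}=\emptyset$.
   Context: Fix a set $\mathsf{Act}$ of actions containing $\tau$. Nondeterministic expressions: $E ::= 0 \mid X \mid \alpha.P \mid \mathrm{rec}\,X.E \mid E + E$; probabilistic expressions: $P ::= \partial(E) \mid P \oplus_p P$ ($0<p<1$). Subdistributions $\mu$ over $S$: $\mu:S\to\mathbb R_{\ge0}$ with $|\mu|=\sum\mu(s)\le1$; $\delta_s$ Dirac, $\emptyset$ empty; operations pointwise. Semantics: least relations with $\partial(E)\mapsto\delta_E$; $P\oplus_pQ\mapsto p\mu+(1-p)\nu$ if $P\mapsto\mu,Q\mapsto\nu$; $\alpha.P\xrightarrow{\alpha}\mu$ if $P\mapsto\mu$; $\mathrm{rec}\,X.E\xrightarrow{\alpha}\mu$ if $E[\mathrm{rec}\,X.E/X]\xrightarrow{\alpha}\mu$; $E+F\xrightarrow{\alpha}\mu$ and $F+E\xrightarrow{\alpha}\mu$ if $E\xrightarrow{\alpha}\mu$. Combined transitions on subdistributions: least relation with $\delta_E\xrightarrow{\alpha}\mu$ if $E\xrightarrow{\alpha}\mu$, closed under $\sum p_i\nu_i\xrightarrow{\alpha}\sum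 p_i\mu_i$ ($\nu_i\xrightarrow{\alpha}\mu_i$, $p_i\ge0$, $\sum p_i\le1$). A derivation is a sequence $(\mu_i^{\to},\mu_i^{\times})_{i\in\mathbb N}$ of subdistributions with $\mu_i^{\to}\xrightarrow{\tau}\mu^{\to}_{i+1}+\mu^{\times}_{i+1}$ for all $i$; $\mu\Rightarrow\nu$ iff some derivation has $\mu=\mu_0^{\to}+\mu_0^{\times}$ and $\nu=\sum_i\mu_i^\times$. $\mu\xRightarrow{\alpha}\nu$ iff $\mu\Rightarrow\rho\xrightarrow{\alpha}\eta\Rightarrow\nu$ for some $\rho,\eta$. *)

theory Defs
  imports "HOL-Analysis.Infinite_Sum"
begin

datatype 'a act = Tau | Vis 'a

datatype ('a, 'v) nexp =
    NZero
  | NVar 'v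
  | NPre "'a act" "('a, 'v) pexp"
  | NRec 'v "('a, 'v) nexp"
  | NSum "('a, 'v) nexp" "('a, 'v) nexp"
and ('a, 'v) pexp =
    PDirac "('a, 'v) nexp"
  | PChoice "('a, 'v) pexp" real "('a, 'v) pexp"

primrec substN :: "('a,'v) nexp \<Rightarrow> 'v \<Rightarrow> ('a,'v) nexp \<Rightarrow> ('a,'v) nexp"
  and substP :: "('a,'v) pexp \<Rightarrow> 'v \<Rightarrow> ('a,'v) nexp \<Rightarrow> ('a,'v) pexp" where
  "substN NZero X F = NZero"
| "substN (NVar Y) X F = (if Y = X then F else NVar Y)"
| "substN (NPre a P) X F = NPre a (substP P X F)"
| "substN (NRec Y E) X F = (if Y = X then NRec Y E else NRec Y (substN E X F))"
| "substN (NSum E1 E2) X F = NSum (substN E1 X F) (substN E2 X F)"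
| "substP (PDirac E) X F = PDirac (substN E X F)"
| "substP (PChoice P p Q) X F = PChoice (substP P X F) p (substP Q X F)"

type_synonym ('a,'v) sdist = "('a,'v) nexp \<Rightarrow> real"

definition subdist :: "('s \<Rightarrow> real) \<Rightarrow> bool" where
  "subdist \<mu> \<longleftrightarrow> (\<forall>s. 0 \<le> \<mu> s) \<and> \<mu> summable_on UNIV \<and> infsum \<mu> UNIV \<le> 1"

definition dirac :: "'s \<Rightarrow> 's \<Rightarrow> real" where
  "dirac s = (\<lambda>t. if t = s then 1 else 0)"

definition empty_dist :: "'s \<Rightarrow> real" where
  "empty_dist = (\<lambda>_. 0)"

inductive pstep :: "('a,'v) pexp \<Rightarrow> ('a,'v) sdist \<Rightarrow> bool" where
  pstep_dirac: "pstep (PDirac E) (dirac E)"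
| pstep_choice: "\<lbrakk>0 < p; p < 1; pstep P \<mu>; pstep Q \<nu>\<rbrakk>
     \<Longrightarrow> pstep (PChoice P p Q) (\<lambda>s. p * \<mu> s + (1 - p) * \<nu> s)"

inductive ntrans :: "('a,'v) nexp \<Rightarrow> 'a act \<Rightarrow> ('a,'v) sdist \<Rightarrow> bool" where
  ntrans_pre: "pstep P \<mu> \<Longrightarrow> ntrans (NPre \<alpha> P) \<alpha> \<mu>"
| ntrans_rec: "ntrans (substN E X (NRec X E)) \<alpha> \<mu> \<Longrightarrow> ntrans (NRec X E) \<alpha> \<mu>"
| ntrans_suml: "ntrans E \<alpha> \<mu> \<Longrightarrow> ntrans (NSum E F) \<alpha> \<mu>"
| ntrans_sumr: "ntrans E \<alpha> \<mu> \<Longrightarrow> ntrans (NSum F E) \<alpha> \<mu>"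

text \<open>Combined transitions on subdistributions (countable convex-style combinations,
  indexed by nat; finite combinations are the case of eventually-zero weights).\<close>

inductive ctrans :: "('a,'v) sdist \<Rightarrow> 'a act \<Rightarrow> ('a,'v) sdist \<Rightarrow> bool" where
  ctrans_base: "ntrans E \<alpha> \<mu> \<Longrightarrow> ctrans (dirac E) \<alpha> \<mu>"
| ctrans_comb: "\<lbrakk>\<And>i. ctrans (\<nu> i) \<alpha> (\<mu> i); \<And>i. 0 \<le> p i; summable p; (\<Sum>i. p i) \<le> 1\<rbrakk>
     \<Longrightarrow> ctrans (\<lambda>s. \<Sum>i. p i * \<nu> i s) \<alpha> (\<lambda>s. \<Sum>i. p i * \<mu> i s)"

definition derivation :: "(nat \<Rightarrow> ('a,'v) sdist) \<Rightarrow> (nat \<Rightarrow> ('a,'v) sdist) \<Rightarrow> bool" where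
  "derivation mto mx \<longleftrightarrow>
     (\<forall>i. subdist (mto i) \<and> subdist (mx i)) \<and>
     (\<forall>i. ctrans (mto i) Tau (\<lambda>s. mto (Suc i) s + mx (Suc i) s))"

definition weak :: "('a,'v) sdist \<Rightarrow> ('a,'v) sdist \<Rightarrow> bool" where
  "weak \<mu> \<nu> \<longleftrightarrow> (\<exists>mto mx. derivation mto mx \<and>
      \<mu> = (\<lambda>s. mto 0 s + mx 0 s) \<and> \<nu> = (\<lambda>s. \<Sum>i. mx i s))"

definition weak_trans :: "('a,'v) sdist \<Rightarrow> 'a act \<Rightarrow> ('a,'v) sdist \<Rightarrow> bool" where
  "weak_trans \<mu> \<alpha> \<nu> \<longleftrightarrow> (\<exists>\<rho> \<eta>. weak \<mu> \<rho> \<and> ctrans \<rho> \<alpha> \<eta> \<and> weak \<eta> \<nu>)"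

end

theory Submission imports Defs "HOL-Analysis.Analysis" begin

lemma nn_sums_iff:
  fixes f :: "nat \<Rightarrow> real"
  assumes "\<And>n. 0 \<le> f n" shows "f sums S \<longleftrightarrow> (f has_sum S) UNIV"
  using assms sums_nonneg_imp_has_sum has_sum_imp_sums by blast

lemma nn_sigma_has_sum:
  fixes g :: "'a \<Rightarrow> 'b \<Rightarrow> real"
  assumes nn: "\<And>i j. 0 \<le> g i j" and f: "\<And>i. (g i has_sum a i) UNIV" and a: "(a has_sum T) UNIV"
  shows "((\<lambda>(i,j). g i j) has_sum T) UNIV"
proof -
  have s: "(\<lambda>(i,j). g i j) summable_on Sigma UNIV (\<lambda>_. UNIV)"
  proof (rule summable_on_SigmaI[where g=a])
    show "\<And>x. x \<in> UNIV \<Longrightarrow> ((\<lambda>y. case (x, y) of (i, j) \<Rightarrow> g i j) has_sum a x) UNIV"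
      using f by simp
    show "a summable_on UNIV" using a by (rule has_sum_imp_summable)
    show "\<And>x y. x \<in> UNIV \<Longrightarrow> y \<in> UNIV \<Longrightarrow> 0 \<le> (case (x, y) of (i, j) \<Rightarrow> g i j)"
      using nn by simp
  qed
  have "((\<lambda>(i,j). g i j) has_sum T) (Sigma UNIV (\<lambda>_. UNIV))"
  proof (rule has_sum_SigmaI[where g=a])
    show "\<And>x. x \<in> UNIV \<Longrightarrow> ((\<lambda>y. case (x, y) of (i, j) \<Rightarrow> g i j) has_sum a x) UNIV"
      using f by simp
  qed (fact a, fact s)
  then show ?thesis by simp
qed

lemma nn_swap:
  fixes g :: "'a \<Rightarrow> 'b \<Rightarrow> real"
  assumes nn: "\<And>i j. 0 \<le> g i j" and f: "\<And>i. (g i has_sum a i) UNIV" and a: "(a has_sum T) UNIV"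
  shows "\<exists>b. (\<forall>j. ((\<lambda>i. g i j) has_sum b j) UNIV) \<and> (b has_sum T) UNIV"
proof -
  have H: "((\<lambda>(i,j). g i j) has_sum T) (UNIV \<times> UNIV)"
    using nn_sigma_has_sum[OF nn f a] by simp
  have H2: "((\<lambda>(j,i). g i j) has_sum T) (Sigma UNIV (\<lambda>_. UNIV))"
    using has_sum_swap[THEN iffD1, OF H] by simp
  have fs: "(\<lambda>i. g i j) summable_on UNIV" for j
  proof -
    have "(\<lambda>(x,y). (\<lambda>j i. g i j) x y) summable_on Sigma UNIV (\<lambda>_. UNIV)"
      using H2 has_sum_imp_summable by simp
    from summable_on_SigmaD1[OF this, of j] show ?thesis by simp
  qed
  define b where "b j = infsum (\<lambda>i. g i j) UNIV" for j
  have "(b has_sum T) UNIV"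
  proof (rule has_sum_Sigma'[OF H2])
    show "\<And>x. x \<in> UNIV \<Longrightarrow> ((\<lambda>y. case (x, y) of (j, i) \<Rightarrow> g i j) has_sum b x) UNIV"
      using fs by (simp add: b_def)
  qed
  moreover have "\<forall>j. ((\<lambda>i. g i j) has_sum b j) UNIV" using fs by (simp add: b_def)
  ultimately show ?thesis by blast
qed

lemma swap_sums:
  fixes g :: "nat \<Rightarrow> nat \<Rightarrow> real"
  assumes nn: "\<And>i j. 0 \<le> g i j" and f: "\<And>i. g i sums a i" and a: "a sums T"
  shows "\<exists>b. (\<forall>j. (\<lambda>i. g i j) sums b j) \<and> b sums T"
proof -
  have an: "0 \<le> a i" for i using f[of i] nn sums_le[of "\<lambda>_. 0" "g i"] by fastforce
  have "\<exists>b. (\<forall>j. ((\<lambda>i. g i j) has_sum b j) UNIV) \<and> (b has_sum T) UNIV"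
    by (rule nn_swap[where a=a]) (use nn f a an nn_sums_iff in auto)
  then obtain b where b1: "\<And>j. ((\<lambda>i. g i j) has_sum b j) UNIV" and b2: "(b has_sum T) UNIV" by blast
  have bn: "0 \<le> b j" for j using b1[of j] nn has_sum_nonneg by blast
  show ?thesis using b1 b2 bn nn has_sum_imp_sums by blast
qed

lemma reindex_sums:
  fixes g :: "nat \<Rightarrow> nat \<Rightarrow> real"
  assumes nn: "\<And>i j. 0 \<le> g i j" and f: "\<And>i. g i sums a i" and a: "a sums T"
  shows "(\<lambda>k. g (fst (prod_decode k)) (snd (prod_decode k))) sums T"
proof -
  have an: "0 \<le> a i" for i using f[of i] nn sums_le[of "\<lambda>_. 0" "g i"] by fastforce
  have H: "((\<lambda>(i,j). g i j) has_sum T) UNIV"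
    by (rule nn_sigma_has_sum[where a=a]) (use nn f a an nn_sums_iff in auto)
  have "((\<lambda>k. (\<lambda>(i,j). g i j) (prod_decode k)) has_sum T) UNIV"
    using has_sum_reindex_bij_betw[of prod_decode UNIV UNIV "\<lambda>(i,j). g i j" T] H bij_prod_decode
    by simp
  then show ?thesis by (auto dest: has_sum_imp_sums simp: case_prod_unfold)
qed

lemma nat_aux1: "b < (a::nat) \<Longrightarrow> a - 1 - b + b + 1 = a" by arith

lemma diag_bij: "bij_betw (\<lambda>(n::nat,k::nat). (n-1-k, k)) (Sigma UNIV (\<lambda>n. {..<n})) UNIV"
proof (rule bij_betw_byWitness[where f'="\<lambda>(m::nat,k::nat). (m+k+1, k)"])
  show "\<forall>a\<in>Sigma UNIV (\<lambda>n. {..<n}). (\<lambda>(m::nat,k::nat). (m+k+1, k)) ((\<lambda>(n::nat,k::nat). (n-1-k, k)) a) = a"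
    using nat_aux1 by auto
  show "\<forall>a'\<in>UNIV. (\<lambda>(n::nat,k::nat). (n-1-k, k)) ((\<lambda>(m::nat,k::nat). (m+k+1, k)) a') = a'"
    by auto
  show "(\<lambda>(n::nat,k::nat). (n-1-k, k)) ` (Sigma UNIV (\<lambda>n. {..<n})) \<subseteq> UNIV" by simp
  show "(\<lambda>(m::nat,k::nat). (m+k+1, k)) ` UNIV \<subseteq> Sigma UNIV (\<lambda>n. {..<n})" by auto
qed

lemma diag_reindex:
  fixes f :: "nat \<Rightarrow> nat \<Rightarrow> real"
  shows "((\<lambda>(n,k). f k (n - 1 - k)) has_sum T) (Sigma UNIV (\<lambda>n. {..<n})) \<longleftrightarrow> ((\<lambda>(m,k). f k m) has_sum T) UNIV"
proof -
  have e: "(\<lambda>x. (\<lambda>(m,k). f k m) ((\<lambda>(n::nat,k::nat). (n-1-k, k)) x)) = (\<lambda>(n,k). f k (n - 1 - k))"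
    by (auto simp: fun_eq_iff)
  show ?thesis
    using has_sum_reindex_bij_betw[OF diag_bij, of "\<lambda>(m,k). f k m" T] unfolding e .
qed

lemma diag_sums:
  fixes f :: "nat \<Rightarrow> nat \<Rightarrow> real"
  assumes nn: "\<And>k m. 0 \<le> f k m" and fs: "\<And>m. (\<lambda>k. f k m) sums c m" and c: "c sums T"
  shows "(\<lambda>n. \<Sum>k<n. f k (n - 1 - k)) sums T"
proof -
  have cn: "0 \<le> c i" for i using fs[of i] nn sums_le[of "\<lambda>_. 0" "\<lambda>k. f k i"] by fastforce
  have H: "((\<lambda>(m,k). f k m) has_sum T) UNIV"
    by (rule nn_sigma_has_sum[where a=c]) (use nn fs c cn nn_sums_iff in auto)
  have H2: "((\<lambda>(n,k). f k (n - 1 - k)) has_sum T) (Sigma UNIV (\<lambda>n. {..<n}))"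
    using diag_reindex[THEN iffD2, OF H] .
  have "((\<lambda>n. \<Sum>k<n. f k (n - 1 - k)) has_sum T) UNIV"
  proof (rule has_sum_Sigma'[OF H2])
    fix x :: nat
    show "((\<lambda>y. case (x, y) of (n, k) \<Rightarrow> f k (n - 1 - k)) has_sum (\<Sum>k<x. f k (x - 1 - k))) {..<x}"
      using has_sum_finite[of "{..<x}" "\<lambda>k. f k (x - 1 - k)"] by simp
  qed
  then show ?thesis by (rule has_sum_imp_sums)
qed

lemma summable_nn_le:
  fixes f g :: "nat \<Rightarrow> real"
  assumes "\<And>n. 0 \<le> f n" "\<And>n. f n \<le> g n" "summable g"
  shows "summable f"
  using summable_comparison_test'[of g 0 f] assms by auto

lemma sums_term_le:
  fixes f :: "nat \<Rightarrow> real"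
  assumes "\<And>n. 0 \<le> f n" "f sums S"
  shows "f n \<le> S"
proof -
  have "sum f {n} \<le> suminf f"
    by (rule sum_le_suminf) (use assms sums_summable in auto)
  then show ?thesis using assms sums_unique by fastforce
qed

definition sdd :: "('s \<Rightarrow> real) \<Rightarrow> real \<Rightarrow> bool" where
  "sdd \<mu> m \<longleftrightarrow> (\<forall>s. 0 \<le> \<mu> s) \<and> (\<mu> has_sum m) UNIV"

lemma sdd_le: "sdd \<mu> m \<Longrightarrow> \<mu> s \<le> m"
  unfolding sdd_def
  by (rule has_sum_mono_neutral[where f=\<mu> and a="\<mu> s" and A="{s}" and g=\<mu> and b=m and B=UNIV]) (auto intro: has_sum_finiteI)

lemma sdd_nonneg_mass: "sdd \<mu> m \<Longrightarrow> 0 \<le> m"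
  unfolding sdd_def by (auto intro: has_sum_nonneg)

lemma sdd_add: "sdd \<mu> a \<Longrightarrow> sdd \<nu> b \<Longrightarrow> sdd (\<lambda>s. \<mu> s + \<nu> s) (a + b)"
  unfolding sdd_def by (auto intro: has_sum_add add_nonneg_nonneg)

lemma sdd_zero: "sdd (\<lambda>s. 0) 0"
  unfolding sdd_def by auto

lemma sdd_sum: "finite K \<Longrightarrow> (\<And>k. k \<in> K \<Longrightarrow> sdd (\<mu> k) (m k)) \<Longrightarrow>
   sdd (\<lambda>s. \<Sum>k\<in>K. \<mu> k s) (\<Sum>k\<in>K. m k)"
proof (induction K rule: finite_induct)
  case empty
  then show ?case using sdd_zero by simp
next
  case (insert x F)
  then show ?case using sdd_add[of "\<mu> x" "m x" "\<lambda>s. \<Sum>k\<in>F. \<mu> k s" "\<Sum>k\<in>F. m k"] by simp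
qed

lemma sdd_unique: "sdd \<mu> a \<Longrightarrow> sdd \<mu> b \<Longrightarrow> a = b"
  unfolding sdd_def by (auto intro: has_sum_unique)

lemma subdist_sdd: "subdist \<mu> \<longleftrightarrow> sdd \<mu> (infsum \<mu> UNIV) \<and> infsum \<mu> UNIV \<le> 1"
  unfolding subdist_def sdd_def by (auto simp: has_sum_iff)

lemma sdd_subdist: "sdd \<mu> m \<Longrightarrow> m \<le> 1 \<Longrightarrow> subdist \<mu>"
  unfolding subdist_def sdd_def by (auto simp: has_sum_iff)

lemma dirac_sdd: "sdd (dirac E) 1"
  unfolding sdd_def dirac_def
  by (auto intro!: has_sum_finite_neutralI[where B="{E}"] split: if_splits)

lemma dirac_nn: "0 \<le> dirac E s" unfolding dirac_def by auto

lemma pstep_sdd: "pstep P \<mu> \<Longrightarrow> sdd \<mu> 1"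
proof (induction rule: pstep.induct)
  case (pstep_dirac E)
  then show ?case by (rule dirac_sdd)
next
  case (pstep_choice p P \<mu> Q \<nu>)
  have h: "((\<lambda>s. p * \<mu> s + (1 - p) * \<nu> s) has_sum (p * 1 + (1 - p) * 1)) UNIV"
    using pstep_choice unfolding sdd_def by (intro has_sum_add has_sum_cmult_right) auto
  have "0 \<le> p * \<mu> s + (1 - p) * \<nu> s" for s
    using pstep_choice unfolding sdd_def by (auto intro!: add_nonneg_nonneg mult_nonneg_nonneg)
  then show ?case using h unfolding sdd_def by simp
qed

lemma ntrans_sdd: "ntrans E \<alpha> \<mu> \<Longrightarrow> sdd \<mu> 1"
  by (induction rule: ntrans.induct) (auto intro: pstep_sdd)


lemma mix_sdd:
  fixes q :: "nat \<Rightarrow> real" and d :: "nat \<Rightarrow> 's \<Rightarrow> real"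
  assumes q0: "\<And>j. 0 \<le> q j" and qs: "summable q" and d: "\<And>j. sdd (d j) 1"
    and m: "\<And>s. (\<lambda>j. q j * d j s) sums m s"
  shows "sdd m (suminf q)"
proof -
  have g1: "((\<lambda>s. q j * d j s) has_sum q j) UNIV" for j
    using has_sum_cmult_right[where f="d j" and a=1 and A=UNIV and c="q j"] d[of j] by (simp add: sdd_def)
  have qh: "(q has_sum suminf q) UNIV"
    using sums_nonneg_imp_has_sum[OF summable_sums[OF qs]] q0 by blast
  have nn: "0 \<le> q j * d j s" for j s using q0 d by (simp add: sdd_def)
  obtain b where b1: "\<forall>s. ((\<lambda>j. q j * d j s) has_sum b s) UNIV" and b2: "(b has_sum suminf q) UNIV"
    using nn_swap[where g="\<lambda>j s. q j * d j s" and a=q, OF nn g1 qh] by blast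
  have "b s = m s" for s
    using sums_unique2[OF has_sum_imp_sums[OF spec[OF b1, of s]] m[of s]] .
  then have "b = m" by auto
  moreover have "0 \<le> b s" for s using b1 nn has_sum_nonneg by blast
  ultimately show ?thesis using b2 unfolding sdd_def by auto
qed

definition rep :: "('a,'v) sdist \<Rightarrow> 'a act \<Rightarrow> ('a,'v) sdist \<Rightarrow> (nat \<Rightarrow> real) \<Rightarrow> (nat \<Rightarrow> ('a,'v) nexp) \<Rightarrow> (nat \<Rightarrow> ('a,'v) sdist) \<Rightarrow> bool" where
  "rep \<mu> \<alpha> \<eta> q E \<theta> \<longleftrightarrow> (\<forall>j. ntrans (E j) \<alpha> (\<theta> j)) \<and> (\<forall>j. 0 \<le> q j) \<and> summable q \<and> suminf q \<le> 1
     \<and> (\<forall>s. (\<lambda>j. q j * dirac (E j) s) sums \<mu> s) \<and> (\<forall>s. (\<lambda>j. q j * \<theta> j s) sums \<eta> s)"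

lemma rep_sdd:
  assumes "rep \<mu> \<alpha> \<eta> q E \<theta>"
  shows "sdd \<mu> (suminf q)" "sdd \<eta> (suminf q)" "suminf q \<le> 1"
proof -
  show "sdd \<mu> (suminf q)"
    by (rule mix_sdd[where d="\<lambda>j. dirac (E j)"]) (use assms dirac_sdd in \<open>auto simp: rep_def\<close>)
  show "sdd \<eta> (suminf q)"
    by (rule mix_sdd[where d=\<theta>]) (use assms ntrans_sdd in \<open>auto simp: rep_def\<close>)
  show "suminf q \<le> 1" using assms by (simp add: rep_def)
qed

lemma rep_ctrans:
  assumes r: "rep \<mu> \<alpha> \<eta> q E \<theta>"
  shows "ctrans \<mu> \<alpha> \<eta>"
proof -
  have c: "ctrans (\<lambda>s. \<Sum>i. q i * dirac (E i) s) \<alpha> (\<lambda>s. \<Sum>i. q i * \<theta> i s)"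
    by (rule ctrans_comb) (use r in \<open>auto simp: rep_def intro: ctrans_base\<close>)
  have "\<mu> = (\<lambda>s. \<Sum>i. q i * dirac (E i) s)" "\<eta> = (\<lambda>s. \<Sum>i. q i * \<theta> i s)"
    using r by (auto simp: rep_def fun_eq_iff sums_unique)
  then show ?thesis using c by simp
qed

lemma rep_combine:
  fixes p :: "nat \<Rightarrow> real"
  assumes R: "\<And>i. rep (\<nu> i) \<alpha> (\<mu> i) (Q i) (EE i) (TH i)" and p: "\<And>i. 0 \<le> p i"
    and c: "(\<lambda>i. p i * suminf (Q i)) sums c" and c1: "c \<le> 1"
    and N: "\<And>s. (\<lambda>i. p i * \<nu> i s) sums N s" and M: "\<And>s. (\<lambda>i. p i * \<mu> i s) sums M s"
  shows "rep N \<alpha> M (\<lambda>k. p (fst (prod_decode k)) * Q (fst (prod_decode k)) (snd (prod_decode k)))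
      (\<lambda>k. EE (fst (prod_decode k)) (snd (prod_decode k))) (\<lambda>k. TH (fst (prod_decode k)) (snd (prod_decode k)))"
proof -
  have Q0: "0 \<le> Q i j" for i j using R[of i] by (simp add: rep_def)
  have Qs: "Q i sums suminf (Q i)" for i using R[of i] by (simp add: rep_def summable_sums)
  have TH0: "0 \<le> TH i j s" for i j s
    using R[of i] ntrans_sdd[of "EE i j" \<alpha> "TH i j"] by (simp add: rep_def sdd_def)
  have rs: "(\<lambda>k. p (fst (prod_decode k)) * Q (fst (prod_decode k)) (snd (prod_decode k))) sums c"
    by (rule reindex_sums[where g="\<lambda>i j. p i * Q i j" and a="\<lambda>i. p i * suminf (Q i)"])
       (use p Q0 Qs c in \<open>auto intro: sums_mult\<close>)
  have ss: "(\<lambda>k. p (fst (prod_decode k)) * Q (fst (prod_decode k)) (snd (prod_decode k)) *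
              dirac (EE (fst (prod_decode k)) (snd (prod_decode k))) s) sums N s" for s
  proof -
    have "(\<lambda>k. p (fst (prod_decode k)) * (Q (fst (prod_decode k)) (snd (prod_decode k)) *
              dirac (EE (fst (prod_decode k)) (snd (prod_decode k))) s)) sums N s"
      by (rule reindex_sums[where g="\<lambda>i j. p i * (Q i j * dirac (EE i j) s)" and a="\<lambda>i. p i * \<nu> i s"])
         (use p Q0 N R in \<open>auto intro!: sums_mult mult_nonneg_nonneg dirac_nn simp: rep_def\<close>)
    then show ?thesis by (simp add: mult.assoc)
  qed
  have ts: "(\<lambda>k. p (fst (prod_decode k)) * Q (fst (prod_decode k)) (snd (prod_decode k)) *
              TH (fst (prod_decode k)) (snd (prod_decode k)) s) sums M s" for s
  proof -
    have "(\<lambda>k. p (fst (prod_decode k)) * (Q (fst (prod_decode k)) (snd (prod_decode k)) *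
              TH (fst (prod_decode k)) (snd (prod_decode k)) s)) sums M s"
      by (rule reindex_sums[where g="\<lambda>i j. p i * (Q i j * TH i j s)" and a="\<lambda>i. p i * \<mu> i s"])
         (use p Q0 M R TH0 in \<open>auto intro!: sums_mult mult_nonneg_nonneg simp: rep_def\<close>)
    then show ?thesis by (simp add: mult.assoc)
  qed
  show ?thesis unfolding rep_def
    using R rs ss ts c1 p Q0 by (auto simp: rep_def sums_iff intro: mult_nonneg_nonneg)
qed

lemma single_sums: "(\<lambda>j::nat. (if j = 0 then 1 else 0) * (c::real)) sums c"
proof -
  have "(\<lambda>j::nat. (if j = 0 then 1 else 0) * c) = (\<lambda>j. if j = 0 then (\<lambda>_. c) j else 0)" by auto
  then show ?thesis using sums_single[of 0 "\<lambda>_. c"] by simp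
qed

lemma ctrans_rep: "ctrans \<mu> \<alpha> \<eta> \<Longrightarrow> \<exists>q E \<theta>. rep \<mu> \<alpha> \<eta> q E \<theta>"
proof (induction rule: ctrans.induct)
  case (ctrans_base E \<alpha> \<mu>)
  have "rep (dirac E) \<alpha> \<mu> (\<lambda>j. if j = 0 then 1 else 0) (\<lambda>_. E) (\<lambda>_. \<mu>)"
    unfolding rep_def
  proof (intro conjI allI)
    show "summable (\<lambda>j::nat. if j = 0 then 1 else 0 :: real)"
      using single_sums[of 1] sums_summable by simp
    show "(\<Sum>j. if j = 0 then 1 else 0 :: real) \<le> 1"
      using single_sums[of 1] sums_unique by fastforce
    show "\<And>s. (\<lambda>j. (if j = 0 then 1 else 0) * dirac E s) sums dirac E s" by (rule single_sums)
    show "\<And>s. (\<lambda>j. (if j = 0 then 1 else 0) * \<mu> s) sums \<mu> s" by (rule single_sums)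
  qed (use ctrans_base in auto)
  then show ?case by blast
next
  case (ctrans_comb \<nu> \<alpha> \<mu> p)
  obtain Q EE TH where R: "\<And>i. rep (\<nu> i) \<alpha> (\<mu> i) (Q i) (EE i) (TH i)"
    using ctrans_comb.IH by metis
  have Q1: "suminf (Q i) \<le> 1" "0 \<le> suminf (Q i)" for i
    using rep_sdd[OF R[of i]] sdd_nonneg_mass by auto
  have cs: "summable (\<lambda>i. p i * suminf (Q i))"
    by (rule summable_nn_le[where g=p]) (use Q1 ctrans_comb in \<open>auto intro: mult_nonneg_nonneg mult_left_le\<close>)
  have c1: "suminf (\<lambda>i. p i * suminf (Q i)) \<le> 1"
  proof -
    have "suminf (\<lambda>i. p i * suminf (Q i)) \<le> suminf p"
      by (rule suminf_le) (use Q1 ctrans_comb cs in \<open>auto intro: mult_left_le\<close>)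
    then show ?thesis using ctrans_comb by linarith
  qed
  have nu: "0 \<le> \<nu> i s \<and> \<nu> i s \<le> 1" for i s
    using rep_sdd(1)[OF R[of i]] Q1[of i] sdd_le[OF rep_sdd(1)[OF R[of i]], of s] by (auto simp: sdd_def)
  have mu: "0 \<le> \<mu> i s \<and> \<mu> i s \<le> 1" for i s
    using rep_sdd(2)[OF R[of i]] Q1[of i] sdd_le[OF rep_sdd(2)[OF R[of i]], of s] by (auto simp: sdd_def)
  have Ns: "summable (\<lambda>i. p i * \<nu> i s)" for s
    by (rule summable_nn_le[where g=p]) (use nu ctrans_comb in \<open>auto intro: mult_nonneg_nonneg mult_left_le\<close>)
  have Ms: "summable (\<lambda>i. p i * \<mu> i s)" for s
    by (rule summable_nn_le[where g=p]) (use mu ctrans_comb in \<open>auto intro: mult_nonneg_nonneg mult_left_le\<close>)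
  show ?case
    apply (intro exI)
    apply (rule rep_combine[OF R, where p=p and c="suminf (\<lambda>i. p i * suminf (Q i))"])
    using ctrans_comb cs c1 Ns Ms by (auto intro: summable_sums)
qed

lemma ctrans_sdd: "ctrans \<mu> \<alpha> \<eta> \<Longrightarrow> \<exists>m. m \<le> 1 \<and> sdd \<mu> m \<and> sdd \<eta> m"
  using ctrans_rep rep_sdd by metis

lemma ctrans_zero: "ctrans (\<lambda>s. 0) \<alpha> (\<lambda>s. 0)"
proof (rule rep_ctrans)
  show "rep (\<lambda>s. 0) \<alpha> (\<lambda>s. 0) (\<lambda>_. 0) (\<lambda>_. NPre \<alpha> (PDirac NZero)) (\<lambda>_. dirac NZero)"
    unfolding rep_def by (auto intro: ntrans_pre pstep_dirac)
qed


lemma ctrans_fsum: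
  fixes \<mu> \<eta> :: "nat \<Rightarrow> ('a,'v) sdist"
  assumes C: "\<And>k. k < n \<Longrightarrow> ctrans (\<mu> k) \<alpha> (\<eta> k)" and S: "sdd (\<lambda>s. \<Sum>k<n. \<mu> k s) m" and m1: "m \<le> 1"
  shows "ctrans (\<lambda>s. \<Sum>k<n. \<mu> k s) \<alpha> (\<lambda>s. \<Sum>k<n. \<eta> k s)"
proof -
  define \<mu>' where "\<mu>' k = (if k < n then \<mu> k else (\<lambda>s. 0))" for k
  define \<eta>' where "\<eta>' k = (if k < n then \<eta> k else (\<lambda>s. 0))" for k
  have "ctrans (\<mu>' k) \<alpha> (\<eta>' k)" for k
    unfolding \<mu>'_def \<eta>'_def using C ctrans_zero by (cases "k < n") auto
  then have "\<forall>k. \<exists>q E \<theta>. rep (\<mu>' k) \<alpha> (\<eta>' k) q E \<theta>" using ctrans_rep by blast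
  then obtain Q EE TH where R: "\<And>k. rep (\<mu>' k) \<alpha> (\<eta>' k) (Q k) (EE k) (TH k)" by metis
  define p :: "nat \<Rightarrow> real" where "p k = (if k < n then 1 else 0)" for k
  have sdk: "sdd (\<mu> k) (suminf (Q k))" if "k < n" for k
    using rep_sdd(1)[OF R[of k]] that by (simp add: \<mu>'_def)
  have "sdd (\<lambda>s. \<Sum>k<n. \<mu> k s) (\<Sum>k<n. suminf (Q k))" by (rule sdd_sum) (use sdk in auto)
  then have msum: "(\<Sum>k<n. suminf (Q k)) = m" using S sdd_unique by blast
  have cs: "(\<lambda>k. p k * suminf (Q k)) sums (\<Sum>k<n. suminf (Q k))"
  proof -
    have "(\<lambda>k. p k * suminf (Q k)) sums (\<Sum>k\<in>{..<n}. p k * suminf (Q k))"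
      by (rule sums_finite) (auto simp: p_def)
    moreover have "(\<Sum>k<n. p k * suminf (Q k)) = (\<Sum>k<n. suminf (Q k))"
      by (rule sum.cong) (auto simp: p_def)
    ultimately show ?thesis by simp
  qed
  have Ns: "(\<lambda>k. p k * \<mu>' k s) sums (\<Sum>k<n. \<mu> k s)" for s
  proof -
    have "(\<lambda>k. p k * \<mu>' k s) sums (\<Sum>k\<in>{..<n}. p k * \<mu>' k s)"
      by (rule sums_finite) (auto simp: p_def)
    moreover have "(\<Sum>k<n. p k * \<mu>' k s) = (\<Sum>k<n. \<mu> k s)"
      by (rule sum.cong) (auto simp: p_def \<mu>'_def)
    ultimately show ?thesis by simp
  qed
  have Ms: "(\<lambda>k. p k * \<eta>' k s) sums (\<Sum>k<n. \<eta> k s)" for s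
  proof -
    have "(\<lambda>k. p k * \<eta>' k s) sums (\<Sum>k\<in>{..<n}. p k * \<eta>' k s)"
      by (rule sums_finite) (auto simp: p_def)
    moreover have "(\<Sum>k<n. p k * \<eta>' k s) = (\<Sum>k<n. \<eta> k s)"
      by (rule sum.cong) (auto simp: p_def \<eta>'_def)
    ultimately show ?thesis by simp
  qed
  show ?thesis
    apply (rule rep_ctrans)
    apply (rule rep_combine[OF R, where p=p and c="\<Sum>k<n. suminf (Q k)"])
    using cs Ns Ms msum m1 by (auto simp: p_def)
qed

lemma ctrans_decomp:
  assumes C: "ctrans \<mu> \<alpha> \<eta>" and nn: "\<And>k s. 0 \<le> \<mu>s k s" and S: "\<And>s. (\<lambda>k. \<mu>s k s) sums \<mu> s"
  shows "\<exists>\<eta>s. (\<forall>k. ctrans (\<mu>s k) \<alpha> (\<eta>s k)) \<and> (\<forall>s. (\<lambda>k. \<eta>s k s) sums \<eta> s)"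
proof -
  obtain q E \<theta> where r: "rep \<mu> \<alpha> \<eta> q E \<theta>" using ctrans_rep[OF C] by blast
  have q0: "\<And>j. 0 \<le> q j" and qs: "summable q" and q1: "suminf q \<le> 1"
    and src: "\<And>s. (\<lambda>j. q j * dirac (E j) s) sums \<mu> s"
    and tgt: "\<And>s. (\<lambda>j. q j * \<theta> j s) sums \<eta> s" and nt: "\<And>j. ntrans (E j) \<alpha> (\<theta> j)"
    using r by (auto simp: rep_def)
  have th: "0 \<le> \<theta> j s \<and> \<theta> j s \<le> 1" for j s
    using ntrans_sdd[OF nt[of j]] sdd_le[OF ntrans_sdd[OF nt[of j]]] by (auto simp: sdd_def)
  have mu0: "0 \<le> \<mu> s" for s using rep_sdd(1)[OF r] by (auto simp: sdd_def)
  have le: "\<mu>s k s \<le> \<mu> s" for k s by (rule sums_term_le[OF _ S]) (use nn in auto)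
  define w where "w k s = (if \<mu> s = 0 then 0 else \<mu>s k s / \<mu> s)" for k s
  have w0: "0 \<le> w k s" for k s using nn mu0 by (auto simp: w_def)
  have w1: "w k s \<le> 1" for k s
  proof (cases "\<mu> s = 0")
    case False
    then have "0 < \<mu> s" using mu0[of s] by linarith
    then show ?thesis using le[of k s] False by (simp add: w_def divide_le_eq_1)
  qed (simp add: w_def)
  have wmu: "w k s * \<mu> s = \<mu>s k s" for k s
    using le[of k s] nn[of k s] by (auto simp: w_def)
  have wsum: "(\<lambda>k. w k s) sums 1" if "\<mu> s \<noteq> 0" for s
    using sums_divide[OF S[of s], of "\<mu> s"] that by (simp add: w_def)
  have qE: "q j \<le> \<mu> (E j)" for j
  proof -
    have "q j * dirac (E j) (E j) \<le> \<mu> (E j)"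
      by (rule sums_term_le[OF _ src]) (use q0 dirac_nn in \<open>auto intro!: mult_nonneg_nonneg\<close>)
    then show ?thesis by (simp add: dirac_def)
  qed
  define \<eta>s where "\<eta>s k s = (\<Sum>j. q j * w k (E j) * \<theta> j s)" for k s
  have rk: "rep (\<mu>s k) \<alpha> (\<eta>s k) (\<lambda>j. q j * w k (E j)) E \<theta>" for k
    unfolding rep_def
  proof (intro conjI allI)
    show "ntrans (E j) \<alpha> (\<theta> j)" for j by (rule nt)
    show "0 \<le> q j * w k (E j)" for j using q0 w0 by simp
    show sk: "summable (\<lambda>j. q j * w k (E j))"
      by (rule summable_nn_le[where g=q]) (use q0 w0 w1 qs in \<open>auto intro: mult_left_le\<close>)
    have "(\<Sum>j. q j * w k (E j)) \<le> suminf q"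
      by (rule suminf_le) (use q0 w0 w1 qs sk in \<open>auto intro: mult_left_le\<close>)
    then show "(\<Sum>j. q j * w k (E j)) \<le> 1" using q1 by linarith
    show "(\<lambda>j. q j * w k (E j) * dirac (E j) s) sums \<mu>s k s" for s
    proof -
      have "(\<lambda>j. q j * w k (E j) * dirac (E j) s) = (\<lambda>j. w k s * (q j * dirac (E j) s))"
        by (auto simp: fun_eq_iff dirac_def)
      moreover have "(\<lambda>j. w k s * (q j * dirac (E j) s)) sums (w k s * \<mu> s)"
        by (rule sums_mult[OF src])
      ultimately show ?thesis using wmu by simp
    qed
    show "(\<lambda>j. q j * w k (E j) * \<theta> j s) sums \<eta>s k s" for s
    proof -
      have lej: "q j * w k (E j) * \<theta> j s \<le> q j * \<theta> j s" for j
        using mult_left_le[of "w k (E j)" "q j * \<theta> j s"] q0[of j] w1[of k "E j"] th[of j s]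
        by (simp add: mult_ac)
      have "summable (\<lambda>j. q j * w k (E j) * \<theta> j s)"
        by (rule summable_nn_le[where g="\<lambda>j. q j * \<theta> j s"])
           (use q0 w0 th lej sums_summable[OF tgt[of s]] in auto)
      then show ?thesis by (simp add: \<eta>s_def summable_sums)
    qed
  qed
  have sum: "(\<lambda>k. \<eta>s k s) sums \<eta> s" for s
  proof -
    have g: "(\<lambda>k. q j * w k (E j) * \<theta> j s) sums (q j * \<theta> j s)" for j
    proof (cases "\<mu> (E j) = 0")
      case True
      then have "q j = 0" using qE[of j] q0[of j] by simp
      then show ?thesis by simp
    next
      case False
      have "(\<lambda>k. (q j * \<theta> j s) * w k (E j)) sums ((q j * \<theta> j s) * 1)"
        by (rule sums_mult[OF wsum[OF False]])
      then show ?thesis by (simp add: mult_ac)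
    qed
    obtain b where b1: "\<forall>k. (\<lambda>j. q j * w k (E j) * \<theta> j s) sums b k" and b2: "b sums \<eta> s"
      using swap_sums[where g="\<lambda>j k. q j * w k (E j) * \<theta> j s", OF _ g tgt] q0 w0 th
      by (auto intro: mult_nonneg_nonneg)
    have "b k = \<eta>s k s" for k
      using sums_unique2[OF spec[OF b1, of k]] rk[of k] by (auto simp: rep_def)
    then have "b = (\<lambda>k. \<eta>s k s)" by auto
    then show ?thesis using b2 by simp
  qed
  show ?thesis using rk sum rep_ctrans by blast
qed


lemma deriv_props:
  assumes D: "derivation mto mx"
  shows "sdd (mto n) (infsum (mto n) UNIV)" "infsum (mto n) UNIV \<le> 1"
    "sdd (mx n) (infsum (mx n) UNIV)" "infsum (mx n) UNIV \<le> 1"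
    "0 \<le> mto n s" "0 \<le> mx n s"
    "ctrans (mto n) Tau (\<lambda>s. mto (Suc n) s + mx (Suc n) s)"
proof -
  have s1: "subdist (mto n)" "subdist (mx n)" and c: "ctrans (mto n) Tau (\<lambda>s. mto (Suc n) s + mx (Suc n) s)"
    using D unfolding derivation_def by blast+
  show "sdd (mto n) (infsum (mto n) UNIV)" "infsum (mto n) UNIV \<le> 1"
    using s1(1) unfolding subdist_sdd by blast+
  show "sdd (mx n) (infsum (mx n) UNIV)" "infsum (mx n) UNIV \<le> 1"
    using s1(2) unfolding subdist_sdd by blast+
  show "0 \<le> mto n s" "0 \<le> mx n s" using s1 unfolding subdist_def by blast+
  show "ctrans (mto n) Tau (\<lambda>s. mto (Suc n) s + mx (Suc n) s)" by (rule c)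
qed

lemma deriv_summable:
  assumes D: "derivation mto mx"
  shows "summable (\<lambda>i. mx i s)"
proof -
  define A where "A n = infsum (mto n) UNIV" for n
  define B where "B n = infsum (mx n) UNIV" for n
  have step: "A n = A (Suc n) + B (Suc n)" for n
  proof -
    obtain m where m1: "sdd (mto n) m" and m2: "sdd (\<lambda>s. mto (Suc n) s + mx (Suc n) s) m"
      using ctrans_sdd[OF deriv_props(7)[OF D, of n]] by blast
    have m3: "sdd (\<lambda>s. mto (Suc n) s + mx (Suc n) s) (A (Suc n) + B (Suc n))"
      unfolding A_def B_def by (rule sdd_add) (rule deriv_props(1)[OF D], rule deriv_props(3)[OF D])
    have "A n = m" unfolding A_def by (rule sdd_unique[OF deriv_props(1)[OF D] m1])
    moreover have "m = A (Suc n) + B (Suc n)" by (rule sdd_unique[OF m2 m3])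
    ultimately show ?thesis by simp
  qed
  have inv: "A n + (\<Sum>j\<le>n. B j) = A 0 + B 0" for n
  proof (induction n)
    case (Suc n)
    then show ?case using step[of n] by (simp only: sum.atMost_Suc)
  qed simp
  have A0: "0 \<le> A n" for n using deriv_props(1)[OF D] sdd_nonneg_mass unfolding A_def by blast
  show ?thesis
  proof (rule bounded_imp_summable)
    show "\<And>n. 0 \<le> mx n s" using deriv_props(6)[OF D] .
    fix n
    have "(\<Sum>k\<le>n. mx k s) \<le> (\<Sum>j\<le>n. B j)"
      by (rule sum_mono) (use sdd_le[OF deriv_props(3)[OF D]] in \<open>auto simp: B_def\<close>)
    also have "\<dots> \<le> A 0 + B 0" using inv[of n] A0[of n] by linarith
    finally show "(\<Sum>k\<le>n. mx k s) \<le> A 0 + B 0" .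
  qed
qed

definition splitw :: "(nat \<Rightarrow> ('a,'v) sdist) \<Rightarrow> (nat \<Rightarrow> ('a,'v) sdist) \<Rightarrow> nat \<Rightarrow> ('a,'v) nexp \<Rightarrow> real" where
  "splitw kto kx n s = (if kto n s + kx n s = 0 then 0 else kto n s / (kto n s + kx n s))"

primrec thf :: "(nat \<Rightarrow> ('a,'v) sdist) \<Rightarrow> (nat \<Rightarrow> ('a,'v) sdist) \<Rightarrow> (nat \<Rightarrow> ('a,'v) sdist) \<Rightarrow> nat \<Rightarrow> nat \<Rightarrow> ('a,'v) sdist" where
  "thf e kto kx 0 = e"
| "thf e kto kx (Suc n) = (SOME T. (\<forall>i. ctrans (\<lambda>s. thf e kto kx n i s * splitw kto kx n s) Tau (T i))
      \<and> (\<forall>s. (\<lambda>i. T i s) sums (kto (Suc n) s + kx (Suc n) s)))"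

lemma splitw_props:
  assumes D: "derivation kto kx"
  shows "0 \<le> splitw kto kx n s" "splitw kto kx n s \<le> 1"
    "(kto n s + kx n s) * splitw kto kx n s = kto n s"
    "(kto n s + kx n s) * (1 - splitw kto kx n s) = kx n s"
proof -
  have a: "0 \<le> kto n s" "0 \<le> kx n s" using deriv_props[OF D] by auto
  show "0 \<le> splitw kto kx n s" using a by (simp add: splitw_def)
  show "splitw kto kx n s \<le> 1" using a by (simp add: splitw_def divide_le_eq_1)
  show e: "(kto n s + kx n s) * splitw kto kx n s = kto n s" using a by (simp add: splitw_def)
  show "(kto n s + kx n s) * (1 - splitw kto kx n s) = kx n s"
    using e by (simp add: algebra_simps)
qed

lemma thf_step:
  assumes D: "derivation kto kx"
    and I1: "\<And>i s. 0 \<le> thf e kto kx n i s"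
    and I2: "\<And>s. (\<lambda>i. thf e kto kx n i s) sums (kto n s + kx n s)"
  shows "(\<forall>i. ctrans (\<lambda>s. thf e kto kx n i s * splitw kto kx n s) Tau (thf e kto kx (Suc n) i))
      \<and> (\<forall>s. (\<lambda>i. thf e kto kx (Suc n) i s) sums (kto (Suc n) s + kx (Suc n) s))"
proof -
  have ex: "\<exists>T. (\<forall>i. ctrans (\<lambda>s. thf e kto kx n i s * splitw kto kx n s) Tau (T i))
      \<and> (\<forall>s. (\<lambda>i. T i s) sums (kto (Suc n) s + kx (Suc n) s))"
  proof (rule ctrans_decomp[OF deriv_props(7)[OF D, of n]])
    show "\<And>k s. 0 \<le> thf e kto kx n k s * splitw kto kx n s"
      using I1 splitw_props(1)[OF D] by (simp add: mult_nonneg_nonneg)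
    show "\<And>s. (\<lambda>k. thf e kto kx n k s * splitw kto kx n s) sums kto n s"
      using sums_mult2[OF I2] splitw_props(3)[OF D] by metis
  qed
  show ?thesis unfolding thf.simps(2) by (rule someI_ex[OF ex])
qed

lemma thf_inv:
  assumes D: "derivation kto kx"
    and e1: "\<And>i s. 0 \<le> e i s" and e2: "\<And>s. (\<lambda>i. e i s) sums (kto 0 s + kx 0 s)"
  shows "(\<forall>i s. 0 \<le> thf e kto kx n i s) \<and> (\<forall>s. (\<lambda>i. thf e kto kx n i s) sums (kto n s + kx n s))"
proof (induction n)
  case 0
  then show ?case using e1 e2 by simp
next
  case (Suc n)
  have st: "(\<forall>i. ctrans (\<lambda>s. thf e kto kx n i s * splitw kto kx n s) Tau (thf e kto kx (Suc n) i))
      \<and> (\<forall>s. (\<lambda>i. thf e kto kx (Suc n) i s) sums (kto (Suc n) s + kx (Suc n) s))"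
    by (rule thf_step[OF D]) (use Suc in auto)
  have "0 \<le> thf e kto kx (Suc n) i s" for i s
    using st ctrans_sdd[of _ Tau "thf e kto kx (Suc n) i"] by (auto simp: sdd_def)
  then show ?case using st by blast
qed

lemma sdd_le_fun:
  assumes "sdd f m" "\<And>s. 0 \<le> g s" "\<And>s. g s \<le> f s"
  shows "\<exists>m'. sdd g m' \<and> m' \<le> m"
proof -
  have fs: "f summable_on UNIV" using assms(1) by (auto simp: sdd_def has_sum_iff)
  have gs: "g summable_on UNIV" by (rule summable_on_comparison_test[OF fs]) (use assms in auto)
  have "infsum g UNIV \<le> infsum f UNIV" by (rule infsum_mono[OF gs fs]) (use assms in auto)
  moreover have "infsum f UNIV = m" using assms(1) by (auto simp: sdd_def has_sum_iff)
  ultimately show ?thesis using gs assms(2) unfolding sdd_def by (auto simp: has_sum_iff)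
qed

lemma suminf_shift0:
  fixes f :: "nat \<Rightarrow> real"
  assumes "f 0 = 0"
  shows "(\<Sum>i. f (Suc i)) = suminf f"
proof -
  have "(\<lambda>n. f (Suc n)) sums s \<longleftrightarrow> f sums s" for s using sums_Suc_iff[of f s] assms by simp
  then have "(sums) (\<lambda>n. f (Suc n)) = (sums) f" by (intro ext) simp
  then show ?thesis unfolding suminf_def by simp
qed


lemma sdd_sum_ex:
  assumes "finite K" "\<And>k. k \<in> K \<Longrightarrow> \<exists>m. sdd (\<mu> k) m"
  shows "\<exists>m. sdd (\<lambda>s. \<Sum>k\<in>K. \<mu> k s) m"
  using assms
proof (induction K rule: finite_induct)
  case empty
  then show ?case using sdd_zero by auto
next
  case (insert x F)
  obtain m1 where m1: "sdd (\<mu> x) m1" using insert by blast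
  obtain m2 where m2: "sdd (\<lambda>s. \<Sum>k\<in>F. \<mu> k s) m2" using insert by blast
  have "sdd (\<lambda>s. \<mu> x s + (\<Sum>k\<in>F. \<mu> k s)) (m1 + m2)" by (rule sdd_add[OF m1 m2])
  then show ?case using insert by auto
qed

lemma sdd_infsum: "sdd \<mu> m \<Longrightarrow> sdd \<mu> (infsum \<mu> UNIV)"
  unfolding sdd_def by (auto simp: has_sum_iff)

lemma a_to_c:
  fixes \<mu> \<nu> \<rho> \<eta> :: "('a,'v) sdist"
  assumes Dm: "derivation mto mx" and mu: "\<mu> = (\<lambda>s. mto 0 s + mx 0 s)" and rho: "\<rho> = (\<lambda>s. \<Sum>i. mx i s)"
    and C: "ctrans \<rho> Tau \<eta>" and Dk: "derivation kto kx" and eta: "\<eta> = (\<lambda>s. kto 0 s + kx 0 s)"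
    and nu: "\<nu> = (\<lambda>s. \<Sum>i. kx i s)" and sub: "subdist \<mu>"
  shows "\<exists>nto nx. derivation nto nx \<and> \<mu> = (\<lambda>s. nto 0 s + nx 0 s) \<and> \<nu> = (\<lambda>s. \<Sum>i. nx i s) \<and> nx 0 = empty_dist"
proof -
  have mxs: "(\<lambda>k. mx k s) sums \<rho> s" for s using deriv_summable[OF Dm] rho by (simp add: summable_sums)
  have "\<exists>\<eta>s. (\<forall>k. ctrans (mx k) Tau (\<eta>s k)) \<and> (\<forall>s. (\<lambda>k. \<eta>s k s) sums \<eta> s)"
    by (rule ctrans_decomp[OF C]) (use deriv_props(6)[OF Dm] mxs in auto)
  then obtain \<eta>s where E1: "\<And>k. ctrans (mx k) Tau (\<eta>s k)" and E2: "\<And>s. (\<lambda>k. \<eta>s k s) sums \<eta> s"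
    by blast
  have e1: "0 \<le> \<eta>s k s" for k s using ctrans_sdd[OF E1[of k]] by (auto simp: sdd_def)
  have e2: "(\<lambda>k. \<eta>s k s) sums (kto 0 s + kx 0 s)" for s using E2[of s] eta by simp
  define th where "th = thf \<eta>s kto kx"
  define a where "a = splitw kto kx"
  have inv0: "\<And>i s. 0 \<le> th n i s" for n using thf_inv[OF Dk e1 e2, of n] unfolding th_def by blast
  have inv1: "\<And>s. (\<lambda>i. th n i s) sums (kto n s + kx n s)" for n
    using thf_inv[OF Dk e1 e2, of n] unfolding th_def by blast
  have stp: "ctrans (\<lambda>s. th n k s * a n s) Tau (th (Suc n) k)" for n k
  proof -
    have "(\<forall>i. ctrans (\<lambda>s. thf \<eta>s kto kx n i s * splitw kto kx n s) Tau (thf \<eta>s kto kx (Suc n) i))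
      \<and> (\<forall>s. (\<lambda>i. thf \<eta>s kto kx (Suc n) i s) sums (kto (Suc n) s + kx (Suc n) s))"
      by (rule thf_step[OF Dk]) (use inv0 inv1 in \<open>auto simp: th_def\<close>)
    then show ?thesis unfolding th_def a_def by blast
  qed
  define kt where "kt k n = (\<lambda>s. th n k s * a n s)" for k n
  define kq where "kq k n = (\<lambda>s. th n k s * (1 - a n s))" for k n
  have a01: "0 \<le> a n s" "a n s \<le> 1" for n s using splitw_props[OF Dk] unfolding a_def by auto
  have kq0: "0 \<le> kq k n s" for k n s using inv0 a01 by (simp add: kq_def)
  have thsplit: "th n k s = kt k n s + kq k n s" for n k s by (simp add: kt_def kq_def algebra_simps)
  have kqs: "(\<lambda>k. kq k n s) sums kx n s" for n s
    using sums_mult2[OF inv1[of n s], of "1 - a n s"] splitw_props(4)[OF Dk, of n s]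
    unfolding kq_def a_def by simp
  have sdd_th: "\<exists>m. sdd (th n k) m" for n k
  proof (cases n)
    case 0
    then show ?thesis using ctrans_sdd[OF E1[of k]] by (auto simp: th_def)
  next
    case (Suc n')
    then show ?thesis using ctrans_sdd[OF stp[of n' k]] by auto
  qed
  have sdd_kt: "\<exists>m. sdd (kt k n) m" for k n
    using ctrans_sdd[OF stp[of n k]] unfolding kt_def by blast
  have sdd_kq: "\<exists>m. sdd (kq k n) m" for k n
  proof -
    obtain m where m: "sdd (th n k) m" using sdd_th by blast
    have "\<exists>m'. sdd (kq k n) m' \<and> m' \<le> m"
      by (rule sdd_le_fun[OF m]) (use kq0 inv0 a01 in \<open>auto simp: kq_def mult_left_le\<close>)
    then show ?thesis by blast
  qed
  define nto where "nto n = (\<lambda>s. mto n s + mx n s + (\<Sum>k<n. kt k (n - 1 - k) s))" for n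
  define nx where "nx n = (\<lambda>s. \<Sum>k<n. kq k (n - 1 - k) s)" for n
  have sdd_nto: "\<exists>m. sdd (nto n) m" for n
  proof -
    obtain m where m: "sdd (\<lambda>s. \<Sum>k\<in>{..<n}. kt k (n - 1 - k) s) m"
      using sdd_sum_ex[of "{..<n}" "\<lambda>k. kt k (n - 1 - k)"] sdd_kt by blast
    have "sdd (nto n) (infsum (mto n) UNIV + infsum (mx n) UNIV + m)"
      unfolding nto_def by (intro sdd_add deriv_props[OF Dm] m)
    then show ?thesis by blast
  qed
  have sdd_nx: "\<exists>m. sdd (nx n) m" for n
    unfolding nx_def using sdd_sum_ex[of "{..<n}" "\<lambda>k. kq k (n - 1 - k)"] sdd_kq by blast
  define A where "A n = infsum (nto n) UNIV" for n
  define B where "B n = infsum (nx n) UNIV" for n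
  have sA: "sdd (nto n) (A n)" for n using sdd_nto[of n] sdd_infsum unfolding A_def by blast
  have sB: "sdd (nx n) (B n)" for n using sdd_nx[of n] sdd_infsum unfolding B_def by blast
  have nto0: "nto 0 = \<mu>" by (simp add: nto_def mu)
  have nx0: "nx 0 = empty_dist" by (simp add: nx_def empty_dist_def)
  have A0: "A 0 \<le> 1" using sub unfolding subdist_def A_def nto0 by blast
  have B0: "B 0 = 0" using sdd_unique[OF sB[of 0], of 0] sdd_zero nx0 by (simp add: empty_dist_def)
  have step: "ctrans (nto n) Tau (\<lambda>s. nto (Suc n) s + nx (Suc n) s)" if An: "A n \<le> 1" for n
  proof -
    define P where "P k = (if k < n then kt k (n - 1 - k) else if k = n then mx n else mto n)" for k
    define Q where "Q k = (if k < n then th (n - k) k else if k = n then \<eta>s n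
       else (\<lambda>s. mto (Suc n) s + mx (Suc n) s))" for k
    have PQ: "ctrans (P k) Tau (Q k)" if kl: "k < Suc (Suc n)" for k
    proof -
      consider (lt) "k < n" | (eq) "k = n" | (sn) "k = Suc n" using kl by linarith
      then show ?thesis
      proof cases
        case lt
        then have e: "Suc (n - 1 - k) = n - k" by arith
        show ?thesis using stp[of "n - 1 - k" k] lt unfolding e by (simp add: P_def Q_def kt_def)
      next
        case eq
        then show ?thesis using E1[of n] by (simp add: P_def Q_def th_def)
      next
        case sn
        then show ?thesis using deriv_props(7)[OF Dm, of n] by (simp add: P_def Q_def)
      qed
    qed
    have sP: "(\<lambda>s. \<Sum>k<Suc (Suc n). P k s) = nto n"
    proof
      fix s
      have "(\<Sum>k<Suc (Suc n). P k s) = (\<Sum>k<n. P k s) + P n s + P (Suc n) s" by simp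
      moreover have "(\<Sum>k<n. P k s) = (\<Sum>k<n. kt k (n - 1 - k) s)" by (rule sum.cong) (auto simp: P_def)
      ultimately show "(\<Sum>k<Suc (Suc n). P k s) = nto n s" by (simp add: P_def nto_def)
    qed
    have sQ: "(\<lambda>s. \<Sum>k<Suc (Suc n). Q k s) = (\<lambda>s. nto (Suc n) s + nx (Suc n) s)"
    proof
      fix s
      have l0: "(\<Sum>k<Suc (Suc n). Q k s) = (\<Sum>k<n. Q k s) + Q n s + Q (Suc n) s" by simp
      have l1: "(\<Sum>k<n. Q k s) = (\<Sum>k<n. th (n - k) k s)" by (rule sum.cong) (auto simp: Q_def)
      have l2: "Q n s = \<eta>s n s" "Q (Suc n) s = mto (Suc n) s + mx (Suc n) s" by (simp_all add: Q_def)
      have r1: "(\<Sum>k<Suc n. kt k (Suc n - 1 - k) s) + (\<Sum>k<Suc n. kq k (Suc n - 1 - k) s)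
              = (\<Sum>k<Suc n. th (n - k) k s)"
        unfolding sum.distrib[symmetric] by (rule sum.cong) (auto simp: thsplit)
      have r2: "(\<Sum>k<Suc n. th (n - k) k s) = (\<Sum>k<n. th (n - k) k s) + \<eta>s n s"
        by (simp add: th_def)
      show "(\<Sum>k<Suc (Suc n). Q k s) = nto (Suc n) s + nx (Suc n) s"
        unfolding l0 l1 l2 nto_def nx_def using r1 r2 by simp
    qed
    have "ctrans (\<lambda>s. \<Sum>k<Suc (Suc n). P k s) Tau (\<lambda>s. \<Sum>k<Suc (Suc n). Q k s)"
      by (rule ctrans_fsum[OF PQ _ An]) (use sA[of n] sP in simp_all)
    then show ?thesis unfolding sP sQ .
  qed
  have Bnn: "0 \<le> B n" for n using sdd_nonneg_mass[OF sB[of n]] .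
  have Ann: "0 \<le> A n" for n using sdd_nonneg_mass[OF sA[of n]] .
  have mass: "A n + (\<Sum>j\<le>n. B j) = A 0" for n
  proof (induction n)
    case 0
    then show ?case using B0 by simp
  next
    case (Suc n)
    have "0 \<le> (\<Sum>j\<le>n. B j)" using Bnn by (simp add: sum_nonneg)
    then have An: "A n \<le> 1" using Suc.IH A0 by linarith
    obtain m where m1: "sdd (nto n) m" and m2: "sdd (\<lambda>s. nto (Suc n) s + nx (Suc n) s) m"
      using ctrans_sdd[OF step[OF An]] by blast
    have "A n = m" by (rule sdd_unique[OF sA m1])
    moreover have "m = A (Suc n) + B (Suc n)" by (rule sdd_unique[OF m2 sdd_add[OF sA sB]])
    moreover have "(\<Sum>j\<le>Suc n. B j) = (\<Sum>j\<le>n. B j) + B (Suc n)" by simp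
    ultimately show ?case using Suc.IH by linarith
  qed
  have A1: "A n \<le> 1" for n
  proof -
    have "0 \<le> (\<Sum>j\<le>n. B j)" using Bnn by (simp add: sum_nonneg)
    then show ?thesis using mass[of n] A0 by linarith
  qed
  have B1: "B n \<le> 1" for n
  proof -
    have "B n \<le> (\<Sum>j\<le>n. B j)" by (rule member_le_sum) (use Bnn in auto)
    then show ?thesis using mass[of n] A0 Ann[of n] by linarith
  qed
  have der: "derivation nto nx"
    unfolding derivation_def using sdd_subdist[OF sA A1] sdd_subdist[OF sB B1] step A1 by blast
  have nus: "\<nu> s = (\<Sum>n. nx n s)" for s
  proof -
    have kxs: "(\<lambda>m. kx m s) sums \<nu> s" using deriv_summable[OF Dk] nu by (simp add: summable_sums)
    have "(\<lambda>n. \<Sum>k<n. kq k (n - 1 - k) s) sums \<nu> s"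
      by (rule diag_sums[where c="\<lambda>m. kx m s"]) (use kq0 kqs kxs in auto)
    then show ?thesis unfolding nx_def by (simp add: sums_unique)
  qed
  have "\<mu> = (\<lambda>s. nto 0 s + nx 0 s)" using nto0 nx0 by (simp add: empty_dist_def)
  moreover have "\<nu> = (\<lambda>s. \<Sum>i. nx i s)" using nus by auto
  ultimately show ?thesis using der nx0 by blast
qed


lemma c_to_b:
  assumes D: "derivation nto nx" and mu: "\<mu> = (\<lambda>s. nto 0 s + nx 0 s)"
    and nu: "\<nu> = (\<lambda>s. \<Sum>i. nx i s)" and n0: "nx 0 = empty_dist"
  shows "\<exists>\<rho>. ctrans \<mu> Tau \<rho> \<and> weak \<rho> \<nu>"
proof -
  have m: "\<mu> = nto 0" using mu n0 by (auto simp: empty_dist_def)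
  have c: "ctrans \<mu> Tau (\<lambda>s. nto (Suc 0) s + nx (Suc 0) s)" using deriv_props(7)[OF D, of 0] m by simp
  have d: "derivation (\<lambda>i. nto (Suc i)) (\<lambda>i. nx (Suc i))"
    using D unfolding derivation_def by blast
  have "(\<Sum>i. nx (Suc i) s) = (\<Sum>i. nx i s)" for s
    by (rule suminf_shift0) (use n0 in \<open>simp add: empty_dist_def\<close>)
  then have "\<nu> = (\<lambda>s. \<Sum>i. nx (Suc i) s)" using nu by auto
  then have "weak (\<lambda>s. nto (Suc 0) s + nx (Suc 0) s) \<nu>"
    unfolding weak_def using d by auto
  then show ?thesis using c by blast
qed

lemma b_to_c:
  fixes \<mu> \<rho> \<nu> :: "('a,'v) sdist"
  assumes sub: "subdist \<mu>" and c: "ctrans \<mu> Tau \<rho>" and w: "weak \<rho> \<nu>"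
  shows "\<exists>nto nx. derivation nto nx \<and> \<mu> = (\<lambda>s. nto 0 s + nx 0 s)
              \<and> \<nu> = (\<lambda>s. \<Sum>i. nx i s) \<and> nx 0 = empty_dist"
proof -
  obtain mto mx where D: "derivation mto mx" and r: "\<rho> = (\<lambda>s. mto 0 s + mx 0 s)"
    and nu: "\<nu> = (\<lambda>s. \<Sum>i. mx i s)"
    using w unfolding weak_def by blast
  define nto where "nto i = (if i = 0 then \<mu> else mto (i - 1))" for i
  define nx where "nx i = (if i = 0 then empty_dist else mx (i - 1))" for i
  have se: "subdist (empty_dist :: ('a,'v) sdist)"
    using sdd_subdist[OF sdd_zero] by (simp add: empty_dist_def)
  have der: "derivation nto nx"
    unfolding derivation_def
  proof (intro conjI allI)
    fix i
    show "subdist (nto i)"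
      using sub D unfolding nto_def derivation_def by auto
    show "subdist (nx i)"
      using se D unfolding nx_def derivation_def by auto
    show "ctrans (nto i) Tau (\<lambda>s. nto (Suc i) s + nx (Suc i) s)"
    proof (cases i)
      case 0
      then show ?thesis using c r by (simp add: nto_def nx_def)
    next
      case (Suc j)
      then show ?thesis using deriv_props(7)[OF D, of j] by (simp add: nto_def nx_def)
    qed
  qed
  have "(\<Sum>i. nx (Suc i) s) = (\<Sum>i. nx i s)" for s
    by (rule suminf_shift0) (simp add: nx_def empty_dist_def)
  then have "\<nu> = (\<lambda>s. \<Sum>i. nx i s)" using nu by (auto simp: nx_def)
  moreover have "\<mu> = (\<lambda>s. nto 0 s + nx 0 s)" by (simp add: nto_def nx_def empty_dist_def)
  moreover have "nx 0 = empty_dist" by (simp add: nx_def)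
  ultimately show ?thesis using der by blast
qed

lemma weak_refl:
  fixes \<mu> :: "('a,'v) sdist"
  assumes sub: "subdist \<mu>"
  shows "weak \<mu> \<mu>"
proof -
  define mto :: "nat \<Rightarrow> ('a,'v) sdist" where "mto i = (\<lambda>s. 0)" for i
  define mx :: "nat \<Rightarrow> ('a,'v) sdist" where "mx i = (if i = 0 then \<mu> else (\<lambda>s. 0))" for i
  have z: "subdist (\<lambda>s::('a,'v) nexp. 0::real)" using sdd_subdist[OF sdd_zero] by simp
  have der: "derivation mto mx"
    unfolding derivation_def mto_def mx_def using sub z ctrans_zero by auto
  have "(\<lambda>i. mx i s) sums \<mu> s" for s
  proof -
    have "(\<lambda>i. mx i s) = (\<lambda>i. if i = 0 then (\<lambda>_. \<mu> s) i else 0)" by (auto simp: mx_def)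
    then show ?thesis using sums_single[of 0 "\<lambda>_. \<mu> s"] by simp
  qed
  then have "\<mu> = (\<lambda>s. \<Sum>i. mx i s)" by (auto simp: sums_unique)
  moreover have "\<mu> = (\<lambda>s. mto 0 s + mx 0 s)" by (simp add: mto_def mx_def)
  ultimately show ?thesis unfolding weak_def using der by blast
qed

theorem mainTheorem10:
  fixes \<mu> \<nu> :: "('a,'v) sdist"
  assumes "subdist \<mu>" and "subdist \<nu>"
  shows "(weak_trans \<mu> Tau \<nu> \<longleftrightarrow> (\<exists>\<rho>. ctrans \<mu> Tau \<rho> \<and> weak \<rho> \<nu>))
       \<and> ((\<exists>\<rho>. ctrans \<mu> Tau \<rho> \<and> weak \<rho> \<nu>) \<longleftrightarrow>
          (\<exists>nto nx. derivation nto nx \<and> \<mu> = (\<lambda>s. nto 0 s + nx 0 s)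
              \<and> \<nu> = (\<lambda>s. \<Sum>i. nx i s) \<and> nx 0 = empty_dist))"
proof -
  have ac: "\<exists>nto nx. derivation nto nx \<and> \<mu> = (\<lambda>s. nto 0 s + nx 0 s)
              \<and> \<nu> = (\<lambda>s. \<Sum>i. nx i s) \<and> nx 0 = empty_dist" if wt: "weak_trans \<mu> Tau \<nu>"
  proof -
    obtain \<rho> \<eta> where w1: "weak \<mu> \<rho>" and c: "ctrans \<rho> Tau \<eta>" and w2: "weak \<eta> \<nu>"
      using wt unfolding weak_trans_def by blast
    obtain mto mx where Dm: "derivation mto mx" and mu: "\<mu> = (\<lambda>s. mto 0 s + mx 0 s)"
      and rho: "\<rho> = (\<lambda>s. \<Sum>i. mx i s)" using w1 unfolding weak_def by blast
    obtain kto kx where Dk: "derivation kto kx" and eta: "\<eta> = (\<lambda>s. kto 0 s + kx 0 s)"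
      and nu: "\<nu> = (\<lambda>s. \<Sum>i. kx i s)" using w2 unfolding weak_def by blast
    show ?thesis by (rule a_to_c[OF Dm mu rho c Dk eta nu assms(1)])
  qed
  have ba: "weak_trans \<mu> Tau \<nu>" if "\<exists>\<rho>. ctrans \<mu> Tau \<rho> \<and> weak \<rho> \<nu>"
    using that weak_refl[OF assms(1)] unfolding weak_trans_def by blast
  have cb: "\<exists>\<rho>. ctrans \<mu> Tau \<rho> \<and> weak \<rho> \<nu>" if "\<exists>nto nx. derivation nto nx \<and> \<mu> = (\<lambda>s. nto 0 s + nx 0 s)
              \<and> \<nu> = (\<lambda>s. \<Sum>i. nx i s) \<and> nx 0 = empty_dist"
    using that c_to_b by blast
  have bc: "\<exists>nto nx. derivation nto nx \<and> \<mu> = (\<lambda>s. nto 0 s + nx 0 s)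
              \<and> \<nu> = (\<lambda>s. \<Sum>i. nx i s) \<and> nx 0 = empty_dist" if "\<exists>\<rho>. ctrans \<mu> Tau \<rho> \<and> weak \<rho> \<nu>"
    using that b_to_c[OF assms(1)] by blast
  show ?thesis using ac ba cb bc by blast
qed

end
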